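(* Let $P>0$, $K\le N$, and for $\mathbf u\in\mathbb R^N$, $S\subseteq[N]$, $\mathbf p\in[0,P]^N$ let $Q(\mathbf u;S,\mathbf p)=\frac{\sum_{j\in S}p_je^{u_j}}{1+\sum_{j\in S}e^{u_j}}$, $q_i(S,\mathbf p|e^{\mathbf u})=\frac{e^{u_i}}{1+\sum_{j\in S}e^{u_j}}$ ($i\in S$) and $q_0(S,\mathbf p|e^{\mathbf u})=\frac1{1+\sum_{j\in S}e^{u_j}}$. (i) For any $(S,\mathbf p)\in\mathcal S_K\times[0,P]^N$ and $\mathbf u,\mathbf u'\in\mathbb R^N$, with $\mathbf w=\mathbf u'-\mathbf u$, $$|Q(\mathbf u';S,\mathbf p)-Q(\mathbf u;S,\mathbf p)|\le\sqrt{\sum_{j\in S}e^{u_j}|p_j-Q(\mathbf u;S,\mathbf p)|^2}\sqrt{\sum_{j\in S}q_j(S,\mathbf p|e^{\mathbf u})q_0(S,\mathbf p|e^{\mathbf u})w_j^2}+\frac32P\max_{j\in S}w_j^2.$$ (ii) Let $\mathbf u,\widetilde{\mathbf u}\in\mathbb R^N$ with $\widetilde{\mathbf u}\ge\mathbf u$ elementwise, let $(\widetilde S,\widetilde{\mathbf p})\in\operatorname{argmax}_{(S,\mathbf p)\in\mathcal S_K\times[0,P]^N}Q(\widetilde{\mathbf u};S,\mathbf p)$ and $\widetilde{\mathbf w}=\widetilde{\mathbf u}-\mathbf u$. Then $$|Q(\widetilde{\mathbf u};\widetilde S,\widetilde{\mathbf p})-Q(\mathbf u;\widetilde S,\widetilde{\mathbf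 p})|\le P\sqrt{\sum_{j\in\widetilde S}q_j(\widetilde S,\widetilde{\mathbf p}|e^{\widetilde{\mathbf u}})q_0(\widetilde S,\widetilde{\mathbf p}|e^{\widetilde{\mathbf u}})\widetilde w_j^2}+\frac32P\max_{j\in\widetilde S}\widetilde w_j^2.$$
   Context: $\mathcal S_K=\{S\subseteq[N]:|S|\le K\}$. The utility vector $\mathbf u$ is treated as a fixed vector, not depending on $\mathbf p$. *)

theory Defs
  imports Complex_Main
begin

text \<open>Items are indexed by [N] = {0..<N}; vectors in R^N are functions nat => real
  (only the values at indices < N matter).\<close>

definition assortments :: "nat \<Rightarrow> nat \<Rightarrow> nat set set" where
  "assortments N K = {S. S \<subseteq> {..<N} \<and> card S \<le> K}"

definition prices :: "nat \<Rightarrow> real \<Rightarrow> (nat \<Rightarrow> real) set" where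
  "prices N P = {p. \<forall>j<N. 0 \<le> p j \<and> p j \<le> P}"

definition Qrev :: "(nat \<Rightarrow> real) \<Rightarrow> nat set \<Rightarrow> (nat \<Rightarrow> real) \<Rightarrow> real" where
  "Qrev u S p = (\<Sum>j\<in>S. p j * exp (u j)) / (1 + (\<Sum>j\<in>S. exp (u j)))"

definition qi :: "nat set \<Rightarrow> (nat \<Rightarrow> real) \<Rightarrow> nat \<Rightarrow> real" where
  "qi S u i = exp (u i) / (1 + (\<Sum>j\<in>S. exp (u j)))"

definition q0 :: "nat set \<Rightarrow> (nat \<Rightarrow> real) \<Rightarrow> real" where
  "q0 S u = 1 / (1 + (\<Sum>j\<in>S. exp (u j)))"

text \<open>max over j in S of f j, with the convention that it is 0 for S empty
  (only applied to nonnegative f).\<close>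
definition maxS :: "nat set \<Rightarrow> (nat \<Rightarrow> real) \<Rightarrow> real" where
  "maxS S f = Max (insert 0 (f ` S))"

end

theory Submission imports Defs "HOL-Analysis.L2_Norm"
begin

lemma wsum_bound:
  fixes pi a c :: "nat \<Rightarrow> real"
  assumes "finite S" "\<And>j. j \<in> S \<Longrightarrow> pi j \<ge> 0" "sum pi S \<le> 1"
    "\<And>j. j \<in> S \<Longrightarrow> \<bar>a j\<bar> \<le> B" "\<And>j. j \<in> S \<Longrightarrow> \<bar>c j\<bar> \<le> C" "B \<ge> 0" "C \<ge> 0"
  shows "\<bar>\<Sum>j\<in>S. pi j * a j * c j\<bar> \<le> B * C"
proof -
  have "\<bar>\<Sum>j\<in>S. pi j * a j * c j\<bar> \<le> (\<Sum>j\<in>S. \<bar>pi j * a j * c j\<bar>)" by (rule sum_abs)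
  also have "\<dots> \<le> (\<Sum>j\<in>S. pi j * (B * C))"
  proof (rule sum_mono)
    fix j assume j: "j \<in> S"
    have "\<bar>a j\<bar> * \<bar>c j\<bar> \<le> B * C" using assms(4,5)[OF j] by (simp add: mult_mono')
    then show "\<bar>pi j * a j * c j\<bar> \<le> pi j * (B * C)" using assms(2)[OF j]
      by (simp add: abs_mult mult.assoc mult_left_mono)
  qed
  also have "\<dots> = (B * C) * sum pi S" by (metis sum_distrib_right mult.commute)
  also have "\<dots> \<le> B * C" using assms(3,6,7) by (simp add: mult_left_le)
  finally show ?thesis .
qed


lemma sq_aux: "(x::real) \<ge> 0 \<Longrightarrow> x / d * w * c = sqrt x * c * (sqrt x * w / d)"
proof -
  assume "x \<ge> 0"
  then have "sqrt x * sqrt x = x" by simp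
  then have "sqrt x * c * (sqrt x * w / d) = (sqrt x * sqrt x) * w * c / d" by (simp add: algebra_simps)
  then show ?thesis using \<open>sqrt x * sqrt x = x\<close> by simp
qed

lemma partI:
  fixes u u' p :: "nat \<Rightarrow> real" and S :: "nat set" and P :: real
  assumes fin: "finite S" and P0: "P \<ge> 0" and pr: "\<And>j. j \<in> S \<Longrightarrow> 0 \<le> p j \<and> p j \<le> P"
  defines "w \<equiv> \<lambda>j. u' j - u j"
  shows "\<bar>Qrev u' S p - Qrev u S p\<bar>
          \<le> sqrt (\<Sum>j\<in>S. exp (u j) * \<bar>p j - Qrev u S p\<bar>^2)
              * sqrt (\<Sum>j\<in>S. qi S u j * q0 S u * (w j)^2)
            + 3/2 * P * maxS S (\<lambda>j. (w j)^2)"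
proof -
  define e where "e = (\<lambda>t j. exp (u j + t * w j))"
  define D where "D = (\<lambda>t. 1 + (\<Sum>j\<in>S. e t j))"
  define N where "N = (\<lambda>t. (\<Sum>j\<in>S. p j * e t j))"
  define D1 where "D1 = (\<lambda>t. (\<Sum>j\<in>S. e t j * w j))"
  define N1 where "N1 = (\<lambda>t. (\<Sum>j\<in>S. p j * e t j * w j))"
  define D2 where "D2 = (\<lambda>t. (\<Sum>j\<in>S. e t j * w j ^ 2))"
  define N2 where "N2 = (\<lambda>t. (\<Sum>j\<in>S. p j * e t j * w j ^ 2))"
  define g where "g = (\<lambda>t. N t / D t)"
  define g1 where "g1 = (\<lambda>t. N1 t / D t - N t * D1 t / D t ^ 2)"
  define g2 where "g2 = (\<lambda>t. N2 t / D t - N1 t * D1 t / D t ^ 2 - (N1 t * D1 t + N t * D2 t) / D t ^ 2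
      + 2 * N t * D1 t ^ 2 / D t ^ 3)"
  define m where "m = maxS S (\<lambda>j. (w j)^2)"
  define M where "M = sqrt m"
  have epos: "e t j > 0" for t j unfolding e_def by simp
  have Dpos: "D t > 0" for t unfolding D_def using epos by (simp add: add_pos_nonneg sum_nonneg less_imp_le)
  have dD: "(D has_real_derivative D1 t) (at t)" for t
    unfolding D_def D1_def e_def
    by (auto intro!: derivative_eq_intros sum.cong simp: power2_eq_square ac_simps)
  have dN: "(N has_real_derivative N1 t) (at t)" for t
    unfolding N_def N1_def e_def
    by (auto intro!: derivative_eq_intros sum.cong simp: power2_eq_square ac_simps)
  have dD1: "(D1 has_real_derivative D2 t) (at t)" for t
    unfolding D2_def D1_def e_def
    by (auto intro!: derivative_eq_intros sum.cong simp: power2_eq_square ac_simps)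
  have dN1: "(N1 has_real_derivative N2 t) (at t)" for t
    unfolding N2_def N1_def e_def
    by (auto intro!: derivative_eq_intros sum.cong simp: power2_eq_square ac_simps)
  have dg: "(g has_real_derivative g1 t) (at t)" for t
  proof -
    have "D t \<noteq> 0" using Dpos[of t] by simp
    then show ?thesis unfolding g_def g1_def
      by (auto intro!: derivative_eq_intros dN dD simp: field_simps power2_eq_square)
  qed
  have dg1: "(g1 has_real_derivative g2 t) (at t)" for t
  proof -
    have "D t \<noteq> 0" using Dpos[of t] by simp
    then show ?thesis unfolding g1_def g2_def
      by (auto intro!: derivative_eq_intros dN dD dN1 dD1 simp: field_simps power2_eq_square power3_eq_cube)
  qed

  have m0: "m \<ge> 0" unfolding m_def maxS_def using fin by (simp add: Max_ge_iff)
  have wm: "(w j)^2 \<le> m" if "j \<in> S" for j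
    unfolding m_def maxS_def using fin that by (simp add: Max_ge_iff)
  have Mm: "M^2 = m" "M \<ge> 0" unfolding M_def using m0 by auto
  have wM: "\<bar>w j\<bar> \<le> M" if "j \<in> S" for j
    unfolding M_def using wm[OF that] real_sqrt_le_mono[of "(w j)^2" m] by simp
  define pi where "pi = (\<lambda>t j. e t j / D t)"
  define Q where "Q = (\<lambda>t. N t / D t)"
  have pi0: "pi t j \<ge> 0" for t j unfolding pi_def using epos[of t j] Dpos[of t] by simp
  have pisum: "sum (pi t) S \<le> 1" for t
  proof -
    have "sum (pi t) S = (\<Sum>j\<in>S. e t j) / D t" unfolding pi_def by (simp add: sum_divide_distrib)
    also have "\<dots> \<le> 1" using Dpos[of t] unfolding D_def by simp
    finally show ?thesis .
  qed
  have Qb: "0 \<le> Q t \<and> Q t \<le> P" for t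
  proof -
    have "N t \<ge> 0" unfolding N_def using pr epos by (intro sum_nonneg mult_nonneg_nonneg) (auto intro: less_imp_le)
    moreover have "N t \<le> P * (\<Sum>j\<in>S. e t j)" unfolding N_def sum_distrib_left
      using pr epos by (intro sum_mono mult_right_mono) (auto intro: less_imp_le)
    moreover have "P * (\<Sum>j\<in>S. e t j) \<le> P * D t" unfolding D_def using P0 by (simp add: mult_left_mono)
    ultimately show ?thesis unfolding Q_def using Dpos[of t] by (simp add: divide_le_eq)
  qed
  have pQ: "\<bar>p j - Q t\<bar> \<le> P" if "j \<in> S" for j t using pr[OF that] Qb[of t] by auto
  have g1_sum: "g1 t = (\<Sum>j\<in>S. pi t j * w j * (p j - Q t))" for t
  proof -
    have "(\<Sum>j\<in>S. pi t j * w j * (p j - Q t)) = (\<Sum>j\<in>S. p j * e t j * w j / D t) - Q t * (\<Sum>j\<in>S. e t j * w j / D t)"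
      unfolding pi_def sum_distrib_left sum_subtractf[symmetric] by (rule sum.cong) (auto simp: algebra_simps diff_divide_distrib add_divide_distrib)
    also have "\<dots> = N1 t / D t - Q t * (D1 t / D t)" unfolding N1_def D1_def sum_divide_distrib ..
    finally show ?thesis unfolding g1_def Q_def by (simp add: power2_eq_square)
  qed
  have X_sum: "N2 t / D t - N t * D2 t / D t ^ 2 = (\<Sum>j\<in>S. pi t j * w j ^ 2 * (p j - Q t))" for t
  proof -
    have "(\<Sum>j\<in>S. pi t j * w j ^ 2 * (p j - Q t)) = (\<Sum>j\<in>S. p j * e t j * w j ^ 2 / D t) - Q t * (\<Sum>j\<in>S. e t j * w j ^ 2 / D t)"
      unfolding pi_def sum_distrib_left sum_subtractf[symmetric] by (rule sum.cong) (auto simp: algebra_simps diff_divide_distrib add_divide_distrib)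
    also have "\<dots> = N2 t / D t - Q t * (D2 t / D t)" unfolding N2_def D2_def sum_divide_distrib ..
    finally show ?thesis unfolding Q_def by (simp add: power2_eq_square)
  qed
  have A_sum: "D1 t / D t = (\<Sum>j\<in>S. pi t j * w j * 1)" for t
    unfolding pi_def D1_def by (simp add: sum_divide_distrib algebra_simps)
  have g2_eq: "g2 t = (N2 t / D t - N t * D2 t / D t ^ 2) - 2 * (D1 t / D t) * g1 t" for t
  proof -
    have "D t \<noteq> 0" using Dpos[of t] by simp
    then show ?thesis unfolding g2_def g1_def by (simp add: field_simps power2_eq_square power3_eq_cube)
  qed
  have gen: "\<bar>x - 2*a*b\<bar> \<le> \<bar>x\<bar> + 2*(\<bar>a\<bar>*\<bar>b\<bar>)" for x a b :: real
    using abs_triangle_ineq4[of x "2*a*b"] by (simp add: abs_mult)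
  have g2b: "\<bar>g2 t\<bar> \<le> 3 * P * m" for t
  proof -
    have b1: "\<bar>N2 t / D t - N t * D2 t / D t ^ 2\<bar> \<le> m * P"
      unfolding X_sum by (rule wsum_bound[OF fin pi0 pisum]) (use wm pQ m0 P0 in auto)
    have b2: "\<bar>g1 t\<bar> \<le> M * P"
      unfolding g1_sum by (rule wsum_bound[OF fin pi0 pisum]) (use wM pQ Mm P0 in auto)
    have b3: "\<bar>D1 t / D t\<bar> \<le> M * 1"
      unfolding A_sum by (rule wsum_bound[OF fin pi0 pisum]) (use wM Mm in auto)
    have "\<bar>g2 t\<bar> \<le> \<bar>N2 t / D t - N t * D2 t / D t ^ 2\<bar> + 2 * (\<bar>D1 t / D t\<bar> * \<bar>g1 t\<bar>)"
      unfolding g2_eq by (rule gen)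
    also have "\<dots> \<le> m * P + 2 * (M * (M * P))"
      using b1 b2 b3 Mm P0 by (intro add_mono mult_left_mono mult_mono) auto
    also have "\<dots> = 3 * P * m" using Mm by (simp add: power2_eq_square algebra_simps)
    finally show ?thesis .
  qed
  define diff where "diff = (\<lambda>n::nat. if n = 0 then g else if n = 1 then g1 else g2)"
  obtain t where t: "0 < t" "t < 1"
    "g 1 = (\<Sum>n<2. diff n 0 / fact n * (1 - 0) ^ n) + diff 2 t / fact 2 * (1 - 0) ^ 2"
    using Taylor_up[of 2 diff g 0 1 0] dg dg1 unfolding diff_def by force
  have gt: "g 1 = g 0 + g1 0 + g2 t / 2" using t(3) unfolding diff_def by (simp add: numeral_2_eq_2)
  have g1': "g 1 = Qrev u' S p" unfolding g_def N_def D_def e_def Qrev_def w_def by simp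
  have g0': "g 0 = Qrev u S p" unfolding g_def N_def D_def e_def Qrev_def by simp
  have Q0: "Q 0 = Qrev u S p" using g0' unfolding g_def Q_def .
  have D0: "D 0 = 1 + (\<Sum>j\<in>S. exp (u j))" unfolding D_def e_def by simp
  define f1 where "f1 = (\<lambda>j. sqrt (exp (u j)) * (p j - Q 0))"
  define f2 where "f2 = (\<lambda>j. sqrt (exp (u j)) * w j / D 0)"
  have "\<bar>g1 0\<bar> = \<bar>\<Sum>j\<in>S. f1 j * f2 j\<bar>"
  proof -
    have "pi 0 j * w j * (p j - Q 0) = f1 j * f2 j" for j
      unfolding pi_def f1_def f2_def e_def by (simp only: mult_zero_left add_0_right) (rule sq_aux, simp)
    then show ?thesis unfolding g1_sum by simp
  qed
  also have "\<dots> \<le> (\<Sum>j\<in>S. \<bar>f1 j\<bar> * \<bar>f2 j\<bar>)" unfolding abs_mult[symmetric] by (rule sum_abs)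
  also have "\<dots> \<le> L2_set f1 S * L2_set f2 S" by (rule L2_set_mult_ineq)
  also have "L2_set f1 S = sqrt (\<Sum>j\<in>S. exp (u j) * \<bar>p j - Qrev u S p\<bar>^2)"
    unfolding L2_set_def f1_def Q0 by (simp add: power_mult_distrib)
  also have "L2_set f2 S = sqrt (\<Sum>j\<in>S. qi S u j * q0 S u * (w j)^2)"
    unfolding L2_set_def f2_def qi_def q0_def D0 by (intro arg_cong[where f=sqrt] sum.cong refl) (simp add: power_mult_distrib power_divide power2_eq_square)
  finally have b0: "\<bar>g1 0\<bar> \<le> sqrt (\<Sum>j\<in>S. exp (u j) * \<bar>p j - Qrev u S p\<bar>^2)
     * sqrt (\<Sum>j\<in>S. qi S u j * q0 S u * (w j)^2)" .
  have "\<bar>Qrev u' S p - Qrev u S p\<bar> = \<bar>g1 0 + g2 t / 2\<bar>" using gt g1' g0' by simp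
  also have "\<dots> \<le> \<bar>g1 0\<bar> + \<bar>g2 t\<bar> / 2" by simp
  also have "\<dots> \<le> sqrt (\<Sum>j\<in>S. exp (u j) * \<bar>p j - Qrev u S p\<bar>^2)
     * sqrt (\<Sum>j\<in>S. qi S u j * q0 S u * (w j)^2) + 3/2 * P * m"
    using b0 g2b[of t] by simp
  finally show ?thesis unfolding m_def .
qed

lemma opt_price:
  assumes fin: "finite St" and St: "St \<in> assortments N K" and pt: "pt \<in> prices N P"
    and opt: "\<forall>S\<in>assortments N K. \<forall>p\<in>prices N P. Qrev ut S p \<le> Qrev ut St pt"
    and j: "j \<in> St"
  shows "pt j = P"
proof (rule ccontr)
  assume ne: "pt j \<noteq> P"
  have jN: "j < N" using St j unfolding assortments_def by auto
  have lt: "pt j < P" using ne pt jN unfolding prices_def by force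
  define p' where "p' = pt(j := P)"
  have p': "p' \<in> prices N P" using pt lt unfolding prices_def p'_def by auto
  define D where "D = 1 + (\<Sum>i\<in>St. exp (ut i))"
  have Dpos: "D > 0" unfolding D_def by (simp add: add_pos_nonneg sum_nonneg less_imp_le)
  have "(\<Sum>i\<in>St. p' i * exp (ut i)) = (\<Sum>i\<in>St. pt i * exp (ut i)) + (P - pt j) * exp (ut j)"
  proof -
    have "(\<Sum>i\<in>St. p' i * exp (ut i)) = p' j * exp (ut j) + (\<Sum>i\<in>St - {j}. p' i * exp (ut i))"
      using fin j by (simp add: sum.remove)
    also have "(\<Sum>i\<in>St - {j}. p' i * exp (ut i)) = (\<Sum>i\<in>St - {j}. pt i * exp (ut i))"
      unfolding p'_def by (rule sum.cong) auto
    also have "(\<Sum>i\<in>St. pt i * exp (ut i)) = pt j * exp (ut j) + (\<Sum>i\<in>St - {j}. pt i * exp (ut i))"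
      using fin j by (simp add: sum.remove)
    ultimately show ?thesis unfolding p'_def by (simp add: algebra_simps)
  qed
  then have "Qrev ut St p' = Qrev ut St pt + (P - pt j) * exp (ut j) / D"
    unfolding Qrev_def D_def[symmetric] by (simp add: add_divide_distrib)
  moreover have "(P - pt j) * exp (ut j) / D > 0" using lt Dpos by simp
  moreover have "Qrev ut St p' \<le> Qrev ut St pt" using opt St p' by blast
  ultimately show False by simp
qed

lemma partII_sum:
  assumes fin: "finite St" and P0: "P \<ge> 0" and pP: "\<And>j. j \<in> St \<Longrightarrow> pt j = P"
  shows "sqrt (\<Sum>j\<in>St. exp (ut j) * \<bar>pt j - Qrev ut St pt\<bar>^2) \<le> P"
proof -
  define s where "s = (\<Sum>j\<in>St. exp (ut j))"
  have s0: "s \<ge> 0" unfolding s_def by (simp add: sum_nonneg less_imp_le)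
  have Q: "Qrev ut St pt = P * s / (1 + s)"
    unfolding Qrev_def s_def using pP by (simp add: sum_distrib_left)
  have d: "P - P * s / (1 + s) = P / (1 + s)" using s0 by (simp add: field_simps)
  have "(\<Sum>j\<in>St. exp (ut j) * \<bar>pt j - Qrev ut St pt\<bar>^2) = (\<Sum>j\<in>St. exp (ut j) * (P / (1 + s))^2)"
    using pP by (intro sum.cong refl) (simp add: Q d power_divide)
  also have "\<dots> = s * (P / (1 + s))^2" unfolding s_def by (simp add: sum_distrib_right)
  also have "\<dots> = P^2 * (s / (1 + s)^2)" by (simp add: power_divide)
  also have "\<dots> \<le> P^2 * 1"
  proof (rule mult_left_mono)
    have "s \<le> (1 + s)^2" using s0 by (simp add: power2_eq_square algebra_simps)
    then show "s / (1 + s)^2 \<le> 1" using s0 by (simp add: divide_le_eq)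
  qed simp
  finally show ?thesis using P0 by (simp add: real_le_lsqrt)
qed

theorem propositionC2:
  fixes P :: real and K N :: nat
  assumes "P > 0" and "K \<le> N"
  shows
   "(\<forall>S p u u'. S \<in> assortments N K \<longrightarrow> p \<in> prices N P \<longrightarrow>
      (let w = (\<lambda>j. u' j - u j) in
        \<bar>Qrev u' S p - Qrev u S p\<bar>
          \<le> sqrt (\<Sum>j\<in>S. exp (u j) * \<bar>p j - Qrev u S p\<bar>^2)
              * sqrt (\<Sum>j\<in>S. qi S u j * q0 S u * (w j)^2)
            + 3/2 * P * maxS S (\<lambda>j. (w j)^2)))
    \<and>
    (\<forall>u ut St pt. (\<forall>j<N. u j \<le> ut j) \<longrightarrow>
       St \<in> assortments N K \<longrightarrow> pt \<in> prices N P \<longrightarrow>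
       (\<forall>S\<in>assortments N K. \<forall>p\<in>prices N P. Qrev ut S p \<le> Qrev ut St pt) \<longrightarrow>
      (let wt = (\<lambda>j. ut j - u j) in
        \<bar>Qrev ut St pt - Qrev u St pt\<bar>
          \<le> P * sqrt (\<Sum>j\<in>St. qi St ut j * q0 St ut * (wt j)^2)
            + 3/2 * P * maxS St (\<lambda>j. (wt j)^2)))"
proof (intro conjI allI impI)
  fix S p u u'
  assume S: "S \<in> assortments N K" and p: "p \<in> prices N P"
  have fin: "finite S" using S unfolding assortments_def by (auto intro: finite_subset)
  have pr: "0 \<le> p j \<and> p j \<le> P" if "j \<in> S" for j
    using S p that unfolding assortments_def prices_def by auto
  show "let w = (\<lambda>j. u' j - u j) in
        \<bar>Qrev u' S p - Qrev u S p\<bar>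
          \<le> sqrt (\<Sum>j\<in>S. exp (u j) * \<bar>p j - Qrev u S p\<bar>^2)
              * sqrt (\<Sum>j\<in>S. qi S u j * q0 S u * (w j)^2)
            + 3/2 * P * maxS S (\<lambda>j. (w j)^2)"
    unfolding Let_def using partI[where u=u and u'=u' and p=p and S=S and P=P, OF fin _ pr] assms(1) by simp
next
  fix u ut St pt
  assume St: "St \<in> assortments N K" and pt: "pt \<in> prices N P"
    and opt: "\<forall>S\<in>assortments N K. \<forall>p\<in>prices N P. Qrev ut S p \<le> Qrev ut St pt"
  have fin: "finite St" using St unfolding assortments_def by (auto intro: finite_subset)
  have pr: "0 \<le> pt j \<and> pt j \<le> P" if "j \<in> St" for j
    using St pt that unfolding assortments_def prices_def by auto
  have pP: "pt j = P" if "j \<in> St" for j using opt_price[OF fin St pt opt that] .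
  have I: "\<bar>Qrev u St pt - Qrev ut St pt\<bar>
          \<le> sqrt (\<Sum>j\<in>St. exp (ut j) * \<bar>pt j - Qrev ut St pt\<bar>^2)
              * sqrt (\<Sum>j\<in>St. qi St ut j * q0 St ut * (u j - ut j)^2)
            + 3/2 * P * maxS St (\<lambda>j. (u j - ut j)^2)"
    using partI[where u=ut and u'=u and p=pt and S=St and P=P, OF fin _ pr] assms(1) by simp
  have sq: "(u j - ut j)^2 = (ut j - u j)^2" for j by (simp add: power2_commute)
  have "sqrt (\<Sum>j\<in>St. exp (ut j) * \<bar>pt j - Qrev ut St pt\<bar>^2)
              * sqrt (\<Sum>j\<in>St. qi St ut j * q0 St ut * (ut j - u j)^2)
        \<le> P * sqrt (\<Sum>j\<in>St. qi St ut j * q0 St ut * (ut j - u j)^2)"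
  proof (rule mult_right_mono[OF partII_sum[OF fin _ pP]])
    have Dp: "0 < 1 + (\<Sum>j\<in>St. exp (ut j))" by (simp add: add_pos_nonneg sum_nonneg less_imp_le)
    have "0 \<le> qi St ut j * q0 St ut * (ut j - u j)^2" for j
      unfolding qi_def q0_def using Dp by (intro mult_nonneg_nonneg divide_nonneg_pos) auto
    then show "0 \<le> sqrt (\<Sum>j\<in>St. qi St ut j * q0 St ut * (ut j - u j)^2)"
      by (simp add: sum_nonneg)
  qed (use assms(1) in auto)
  then show "let wt = (\<lambda>j. ut j - u j) in
        \<bar>Qrev ut St pt - Qrev u St pt\<bar>
          \<le> P * sqrt (\<Sum>j\<in>St. qi St ut j * q0 St ut * (wt j)^2)
            + 3/2 * P * maxS St (\<lambda>j. (wt j)^2)"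
    using I unfolding Let_def sq by (simp add: abs_minus_commute)
qed

end
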